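(* Let $w$ be a decreasing weight on $(0,\infty)$ and $w(\infty):=\lim_{t\to\infty}w(t)$. Then: (i) There exists a weight $v$ such that $\Lambda^1(w)=\Gamma^1(v)$ if and only if $w(\infty)=0$. (ii) $\Lambda^1(w)=L^1$ if and only if $w(\infty)>0$ and $w\in L^\infty$. (iii) There exists a weight $v$ such that $\Lambda^1(w)=\Gamma^1(v)\cap L^1$, $L^1\not\subset\Gamma^1(v)$ and $\Gamma^1(v)\not\subset L^1$ if and only if $w(\infty)>0$ and $w\notin L^\infty$.
   Context: A weight is a nonnegative locally integrable measurable function on $(0,\infty)$; "decreasing" means nonincreasing. For a measurable function $f$ on $\mathbb{R}^n$, $f^*$ is its decreasing rearrangement and $f^{**}(t)=\frac1t\int_0^t f^*(s)\,ds$. $\Lambda^1(w)$ is the set of $f$ with $\|f\|_{\Lambda^1(w)}=\int_0^\infty f^*(t)w(t)\,dt<\infty$; $\Gamma^1(v)$ is the set of $f$ with $\|f\|_{\Gamma^1(v)}=\int_0^\infty f^{**}(t)v(t)\,dt<\infty$; $L^1=L^1(\mathbb{R}^n)$; $\Gamma^1(v)\cap L^1$ carries the norm $\|f\|_{\Gamma^1(v)}+\|f\|_{L^1}$. $X\subset Y$ means there is $C$ with $\|f\|_Y\le C\|f\|_X$ for all $f$; $X=Y$ means both inclusions hold; $X\not\subset Y$ means $X\subset Y$ fails. *)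

theory Defs
  imports "HOL-Analysis.Analysis"
begin

definition weight :: "(real \<Rightarrow> real) \<Rightarrow> bool" where
  "weight w \<longleftrightarrow> set_borel_measurable lborel {0<..} w
     \<and> (\<forall>t>0. 0 \<le> w t)
     \<and> (\<forall>t>0. (\<integral>\<^sup>+ s\<in>{0<..<t}. ennreal (w s) \<partial>lborel) < \<infinity>)"

definition decreasing_pos :: "(real \<Rightarrow> real) \<Rightarrow> bool" where
  "decreasing_pos w \<longleftrightarrow> (\<forall>s t. 0 < s \<longrightarrow> s \<le> t \<longrightarrow> w t \<le> w s)"

definition winf :: "(real \<Rightarrow> real) \<Rightarrow> real" where
  "winf w = Lim at_top w"

definition Linfty_pos :: "(real \<Rightarrow> real) \<Rightarrow> bool" where
  "Linfty_pos w \<longleftrightarrow> (\<exists>C. AE t in lborel. 0 < t \<longrightarrow> \<bar>w t\<bar> \<le> C)"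

definition distrib_fun :: "('a::euclidean_space \<Rightarrow> real) \<Rightarrow> ennreal \<Rightarrow> ennreal" where
  "distrib_fun f s = emeasure lebesgue {x. s < ennreal \<bar>f x\<bar>}"

definition rearr :: "('a::euclidean_space \<Rightarrow> real) \<Rightarrow> real \<Rightarrow> ennreal" where
  "rearr f t = Inf {s. distrib_fun f s \<le> ennreal t}"

definition maxfun :: "('a::euclidean_space \<Rightarrow> real) \<Rightarrow> real \<Rightarrow> ennreal" where
  "maxfun f t = ennreal (1 / t) * (\<integral>\<^sup>+ s\<in>{0<..<t}. rearr f s \<partial>lborel)"

definition lambda_norm :: "(real \<Rightarrow> real) \<Rightarrow> ('a::euclidean_space \<Rightarrow> real) \<Rightarrow> ennreal" where
  "lambda_norm w f = (\<integral>\<^sup>+ t\<in>{0<..}. rearr f t * ennreal (w t) \<partial>lborel)"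

definition gamma_norm :: "(real \<Rightarrow> real) \<Rightarrow> ('a::euclidean_space \<Rightarrow> real) \<Rightarrow> ennreal" where
  "gamma_norm v f = (\<integral>\<^sup>+ t\<in>{0<..}. maxfun f t * ennreal (v t) \<partial>lborel)"

definition L1_norm :: "('a::euclidean_space \<Rightarrow> real) \<Rightarrow> ennreal" where
  "L1_norm f = (\<integral>\<^sup>+ x. ennreal \<bar>f x\<bar> \<partial>lebesgue)"

definition space_incl :: "(('a::euclidean_space \<Rightarrow> real) \<Rightarrow> ennreal) \<Rightarrow> (('a \<Rightarrow> real) \<Rightarrow> ennreal) \<Rightarrow> bool" where
  "space_incl NX NY \<longleftrightarrow> (\<exists>C::real. C > 0 \<and> (\<forall>f \<in> borel_measurable lebesgue. NY f \<le> ennreal C * NX f))"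

definition space_eq :: "(('a::euclidean_space \<Rightarrow> real) \<Rightarrow> ennreal) \<Rightarrow> (('a \<Rightarrow> real) \<Rightarrow> ennreal) \<Rightarrow> bool" where
  "space_eq NX NY \<longleftrightarrow> space_incl NX NY \<and> space_incl NY NX"

end

theory Submission
  imports Defs
begin

lemma winf_props:
  fixes w :: "real \<Rightarrow> real"
  assumes dec: "decreasing_pos w" and nn: "\<And>t. t > 0 \<Longrightarrow> 0 \<le> w t"
  shows "(w \<longlongrightarrow> winf w) at_top" "\<And>t. t > 0 \<Longrightarrow> winf w \<le> w t" "winf w \<ge> 0"
proof -
  define L where "L = Inf (w ` {0<..})"
  have bdd: "bdd_below (w ` {0<..})" using nn by (auto intro!: bdd_belowI[of _ 0])
  have Lle: "L \<le> w t" if "t > 0" for t unfolding L_def using bdd that by (auto intro!: cInf_lower)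
  have L0: "L \<ge> 0" unfolding L_def by (rule cInf_greatest) (auto intro: nn)
  have tends: "(w \<longlongrightarrow> L) at_top"
  proof (rule order_tendstoI)
    fix a assume a: "a < L"
    have "a < w t" if "t \<ge> 1" for t using Lle[of t] a that by linarith
    then show "eventually (\<lambda>t. a < w t) at_top"
      by (rule eventually_at_top_linorderI)
  next
    fix a assume a: "L < a"
    have "\<exists>y\<in>w ` {0<..}. y < a" using a unfolding L_def
      by (intro cInf_lessD) auto
    then obtain t0 where t0: "t0 > 0" "w t0 < a" by auto
    have "w t < a" if "t \<ge> t0" for t
      using dec t0 that unfolding decreasing_pos_def by (meson le_less_trans)
    then show "eventually (\<lambda>t. w t < a) at_top"
      by (rule eventually_at_top_linorderI)
  qed
  have "winf w = L" unfolding winf_def using tends by (intro tendsto_Lim) simp_all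
  then show "(w \<longlongrightarrow> winf w) at_top" "\<And>t. t > 0 \<Longrightarrow> winf w \<le> w t" "winf w \<ge> 0"
    using tends Lle L0 by auto
qed

lemma rearr_antimono: "s \<le> t \<Longrightarrow> rearr f t \<le> rearr f s"
  unfolding rearr_def by (rule Inf_superset_mono) (auto intro: order_trans ennreal_leI)

lemma antimono_borel:
  fixes g :: "real \<Rightarrow> ennreal"
  assumes "\<And>s t. s \<le> t \<Longrightarrow> g t \<le> g s"
  shows "g \<in> borel_measurable borel"
proof (rule borel_measurableI_greater)
  fix y
  have "is_interval {x. y < g x}" unfolding is_interval_1
    using assms by (auto intro: less_le_trans)
  then show "{x \<in> space borel. y < g x} \<in> sets borel"
    using real_interval_borel_measurable by simp
qed

lemma rearr_borel[measurable]: "rearr f \<in> borel_measurable borel"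
  by (rule antimono_borel) (rule rearr_antimono)

lemma rearr_lborel[measurable]: "rearr f \<in> borel_measurable lborel"
  using rearr_borel by (simp add: measurable_lborel1)

lemma distrib_fun_real:
  assumes "r \<ge> 0"
  shows "distrib_fun f (ennreal r) = emeasure lebesgue {x. r < \<bar>f x\<bar>}"
  unfolding distrib_fun_def using assms by (simp add: ennreal_less_iff)

lemma lebesgue_set_less_abs:
  fixes f :: "'a::euclidean_space \<Rightarrow> real"
  assumes f[measurable]: "f \<in> borel_measurable lebesgue"
  shows "{x. c < \<bar>f x\<bar>} \<in> sets lebesgue"
proof -
  have "{x\<in>space lebesgue. c < \<bar>f x\<bar>} \<in> sets lebesgue" by measurable
  then show ?thesis by simp
qed

lemma rearr_less_iff:
  fixes f :: "'a::euclidean_space \<Rightarrow> real"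
  assumes f[measurable]: "f \<in> borel_measurable lebesgue" and r: "r \<ge> 0"
  shows "ennreal r < rearr f t \<longleftrightarrow> ennreal t < distrib_fun f (ennreal r)"
proof
  assume "ennreal r < rearr f t"
  then show "ennreal t < distrib_fun f (ennreal r)"
    unfolding rearr_def using Inf_lower[of "ennreal r" "{s. distrib_fun f s \<le> ennreal t}"]
    by (auto simp: not_less[symmetric])
next
  assume t: "ennreal t < distrib_fun f (ennreal r)"
  define A where "A n = {x. r + 1 / Suc n < \<bar>f x\<bar>}" for n :: nat
  have Ameas: "range A \<subseteq> sets lebesgue" unfolding A_def using lebesgue_set_less_abs[OF f] by auto
  have Ainc: "incseq A"
  proof (rule incseq_SucI)
    fix n
    have le: "1 / real (Suc (Suc n)) \<le> 1 / real (Suc n)" by (rule divide_left_mono) auto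
    show "A n \<subseteq> A (Suc n)" unfolding A_def
    proof
      fix x assume "x \<in> {x. r + 1 / real (Suc n) < \<bar>f x\<bar>}"
      then show "x \<in> {x. r + 1 / real (Suc (Suc n)) < \<bar>f x\<bar>}" using le by simp
    qed
  qed
  have UA: "(\<Union>n. A n) = {x. r < \<bar>f x\<bar>}"
  proof safe
    fix x n assume "x \<in> A n"
    then have "r + 1 / real (Suc n) < \<bar>f x\<bar>" unfolding A_def by simp
    moreover have "0 \<le> 1 / real (Suc n)" by simp
    ultimately show "r < \<bar>f x\<bar>" by linarith
  next
    fix x assume "r < \<bar>f x\<bar>"
    then obtain n where "1 / Suc n < \<bar>f x\<bar> - r"
      by (metis diff_gt_0_iff_gt nat_approx_posE)
    then have "x \<in> A n" unfolding A_def by simp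
    then show "x \<in> (\<Union>n. A n)" by blast
  qed
  have "ennreal t < (SUP n. emeasure lebesgue (A n))"
    using t unfolding distrib_fun_real[OF r] SUP_emeasure_incseq[OF Ameas Ainc] UA .
  then obtain n where n: "ennreal t < emeasure lebesgue (A n)"
    by (auto simp: less_SUP_iff)
  have "ennreal (r + 1 / Suc n) \<le> rearr f t"
    unfolding rearr_def
  proof (rule Inf_greatest)
    fix \<sigma> assume "\<sigma> \<in> {s. distrib_fun f s \<le> ennreal t}"
    then have \<sigma>: "distrib_fun f \<sigma> \<le> ennreal t" by simp
    show "ennreal (r + 1 / Suc n) \<le> \<sigma>"
    proof (rule ccontr)
      assume "\<not> ennreal (r + 1 / Suc n) \<le> \<sigma>"
      then have lt: "\<sigma> < ennreal (r + 1 / Suc n)" by simp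
      have "A n \<subseteq> {x. \<sigma> < ennreal \<bar>f x\<bar>}"
      proof
        fix x assume "x \<in> A n"
        then have h: "r + 1 / real (Suc n) < \<bar>f x\<bar>" unfolding A_def by simp
        have "0 < r + 1 / real (Suc n)" using r by (simp add: add_nonneg_pos)
        then have "ennreal (r + 1 / real (Suc n)) < ennreal \<bar>f x\<bar>"
          using h by (intro ennreal_lessI) simp_all
        then show "x \<in> {x. \<sigma> < ennreal \<bar>f x\<bar>}" using lt by simp
      qed
      have Sm: "{x. \<sigma> < ennreal \<bar>f x\<bar>} \<in> sets lebesgue"
      proof -
        have "{x\<in>space lebesgue. \<sigma> < ennreal \<bar>f x\<bar>} \<in> sets lebesgue" by measurable
        then show ?thesis by simp
      qed
      from this \<open>A n \<subseteq> _\<close> have "emeasure lebesgue (A n) \<le> distrib_fun f \<sigma>"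
        unfolding distrib_fun_def
        by (intro emeasure_mono) (simp_all add: Sm)
      then show False using n \<sigma> by simp
    qed
  qed
  moreover have "ennreal r < ennreal (r + 1 / Suc n)"
    using r by (simp add: ennreal_lessI)
  ultimately show "ennreal r < rearr f t" by (meson less_le_trans)
qed

lemma ennreal_ge_nat_top:
  fixes x :: ennreal
  assumes "\<And>n::nat. ennreal (real n) \<le> x"
  shows "x = \<infinity>"
proof (cases x)
  case (real r)
  obtain n :: nat where n: "r < real n" using reals_Archimedean2 by blast
  have "ennreal (real n) \<le> ennreal r" using assms[of n] real by simp
  then have "real n \<le> r" using real by (simp add: ennreal_le_iff)
  then show ?thesis using n by simp
qed simp

lemma emeasure_lborel_Ioi_top: "emeasure lborel {(a::real)<..} = \<infinity>"
proof (rule ennreal_ge_nat_top)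
  fix n :: nat
  have "ennreal (real n) = emeasure lborel {a<..<a + real n}" by simp
  also have "\<dots> \<le> emeasure lborel {a<..}" by (rule emeasure_mono) auto
  finally show "ennreal (real n) \<le> emeasure lborel {a<..}" .
qed

lemma sigma_finite_lebesgue: "sigma_finite_measure (lebesgue :: 'a::euclidean_space measure)"
  unfolding sigma_finite_measure_def
proof (intro exI[of _ "range (\<lambda>n::nat. cball (0::'a) (real n))"] conjI)
  show "countable (range (\<lambda>n::nat. cball (0::'a) (real n)))" by simp
  show "range (\<lambda>n::nat. cball (0::'a) (real n)) \<subseteq> sets lebesgue" by auto
  show "\<Union> (range (\<lambda>n::nat. cball (0::'a) (real n))) = space lebesgue"
  proof (auto simp: mem_cball)
    fix x :: 'a
    obtain n :: nat where "norm x \<le> real n" using real_arch_simple by blast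
    then show "\<exists>n::nat. norm x \<le> real n" by blast
  qed
  show "\<forall>a\<in>range (\<lambda>n::nat. cball (0::'a) (real n)). emeasure lebesgue a \<noteq> \<infinity>"
    using emeasure_lborel_cball_finite by (auto simp: less_top)
qed

lemma layer_cake:
  fixes g :: "'a \<Rightarrow> ennreal"
  assumes sf: "sigma_finite_measure M" and g[measurable]: "g \<in> borel_measurable M"
  shows "(\<integral>\<^sup>+x. g x \<partial>M) = (\<integral>\<^sup>+s. indicator {0<..} s * emeasure M {x\<in>space M. ennreal s < g x} \<partial>lborel)"
proof -
  interpret M: sigma_finite_measure M by (rule sf)
  interpret P: pair_sigma_finite M lborel ..
  define F where "F x s = (if 0 < s \<and> ennreal s < g x then 1 else (0::ennreal))" for x s
  have Fm: "case_prod F \<in> borel_measurable (M \<Otimes>\<^sub>M lborel)"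
    unfolding F_def by measurable
  have inner: "g x = (\<integral>\<^sup>+s. F x s \<partial>lborel)" for x
  proof -
    have "(\<integral>\<^sup>+s. F x s \<partial>lborel) = (\<integral>\<^sup>+s. indicator {s. 0 < s \<and> ennreal s < g x} s \<partial>lborel)"
      unfolding F_def by (intro nn_integral_cong) (simp add: indicator_def)
    also have "\<dots> = emeasure lborel {s. 0 < s \<and> ennreal s < g x}"
    proof (rule nn_integral_indicator)
      have "{s\<in>space lborel. 0 < s \<and> ennreal s < g x} \<in> sets lborel" by measurable
      then show "{s. 0 < s \<and> ennreal s < g x} \<in> sets lborel" by simp
    qed
    also have "\<dots> = g x"
    proof (cases "g x")
      case (real r)
      then have "{s. 0 < s \<and> ennreal s < g x} = {0<..<r}"
        by (auto simp: ennreal_less_iff)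
      then show ?thesis using real by simp
    next
      case top
      then have "{s. 0 < s \<and> ennreal s < g x} = {0<..}" by auto
      then show ?thesis using top by (simp add: emeasure_lborel_Ioi_top)
    qed
    finally show ?thesis by simp
  qed
  have "(\<integral>\<^sup>+x. g x \<partial>M) = (\<integral>\<^sup>+x. (\<integral>\<^sup>+s. F x s \<partial>lborel) \<partial>M)"
    using inner by simp
  also have "\<dots> = (\<integral>\<^sup>+s. (\<integral>\<^sup>+x. F x s \<partial>M) \<partial>lborel)"
    using P.Fubini'[OF Fm] by simp
  also have "\<dots> = (\<integral>\<^sup>+s. indicator {0<..} s * emeasure M {x\<in>space M. ennreal s < g x} \<partial>lborel)"
  proof (intro nn_integral_cong)
    fix s :: real
    have "(\<integral>\<^sup>+x. F x s \<partial>M) = (\<integral>\<^sup>+x. indicator {0<..} s * indicator {x\<in>space M. ennreal s < g x} x \<partial>M)"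
      unfolding F_def by (intro nn_integral_cong) (simp add: indicator_def)
    also have "\<dots> = indicator {0<..} s * emeasure M {x\<in>space M. ennreal s < g x}"
      by (rule nn_integral_cmult_indicator) measurable
    finally show "(\<integral>\<^sup>+x. F x s \<partial>M) = indicator {0<..} s * emeasure M {x\<in>space M. ennreal s < g x}" .
  qed
  finally show ?thesis .
qed

lemma emeasure_lborel_below:
  "emeasure lborel {t::real. 0 < t \<and> ennreal t < m} = m"
proof (cases m)
  case (real r)
  then have "{t::real. 0 < t \<and> ennreal t < m} = {0<..<r}"
    by (auto simp: ennreal_less_iff)
  then show ?thesis using real by simp
next
  case top
  then have "{t::real. 0 < t \<and> ennreal t < m} = {0<..}" by auto
  then show ?thesis using top by (simp add: emeasure_lborel_Ioi_top)
qed

lemma L1_rearr: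
  fixes f :: "'a::euclidean_space \<Rightarrow> real"
  assumes f[measurable]: "f \<in> borel_measurable lebesgue"
  shows "L1_norm f = (\<integral>\<^sup>+t\<in>{0<..}. rearr f t \<partial>lborel)"
proof -
  have "L1_norm f = (\<integral>\<^sup>+s. indicator {0<..} s * emeasure lebesgue {x\<in>space lebesgue. ennreal s < ennreal \<bar>f x\<bar>} \<partial>lborel)"
    unfolding L1_norm_def by (rule layer_cake[OF sigma_finite_lebesgue]) measurable
  also have "\<dots> = (\<integral>\<^sup>+s. indicator {0<..} s * distrib_fun f (ennreal s) \<partial>lborel)"
    unfolding distrib_fun_def by simp
  finally have 1: "L1_norm f = (\<integral>\<^sup>+s. indicator {0<..} s * distrib_fun f (ennreal s) \<partial>lborel)" .
  have "(\<integral>\<^sup>+t\<in>{0<..}. rearr f t \<partial>lborel) = (\<integral>\<^sup>+s. indicator {0<..} s * emeasure lborel {t\<in>space lborel. ennreal s < rearr f t * indicator {0<..} t} \<partial>lborel)"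
    by (rule layer_cake[OF lborel.sigma_finite_measure_axioms]) measurable
  also have "\<dots> = (\<integral>\<^sup>+s. indicator {0<..} s * distrib_fun f (ennreal s) \<partial>lborel)"
  proof (intro nn_integral_cong)
    fix s :: real
    show "indicator {0<..} s * emeasure lborel {t\<in>space lborel. ennreal s < rearr f t * indicator {0<..} t}
        = indicator {0<..} s * distrib_fun f (ennreal s)"
    proof (cases "0 < s")
      case True
      have "{t\<in>space lborel. ennreal s < rearr f t * indicator {0<..} t} = {t. 0 < t \<and> ennreal t < distrib_fun f (ennreal s)}"
      proof safe
        fix t assume "ennreal s < rearr f t * indicator {0<..} t"
        moreover from this have "0 < t" by (cases "0 < t") auto
        ultimately show "0 < t" "ennreal t < distrib_fun f (ennreal s)"
          using rearr_less_iff[OF f, of s t] True by auto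
      next
        fix t assume "0 < t" "ennreal t < distrib_fun f (ennreal s)"
        then show "ennreal s < rearr f t * indicator {0<..} t"
          using rearr_less_iff[OF f, of s t] True by auto
      qed simp
      then show ?thesis by (simp add: emeasure_lborel_below)
    qed simp
  qed
  finally show ?thesis using 1 by simp
qed

definition posf :: "(real \<Rightarrow> real) \<Rightarrow> real \<Rightarrow> real" where
  "posf u t = (if 0 < t then u t else 0)"

lemma nn_integral_Ioi_SUP:
  fixes g :: "real \<Rightarrow> ennreal"
  assumes [measurable]: "g \<in> borel_measurable lborel"
  shows "(\<integral>\<^sup>+t. indicator {s<..} t * g t \<partial>lborel) = (SUP n. \<integral>\<^sup>+t. indicator {s<..real n} t * g t \<partial>lborel)"
proof -
  have inc: "incseq (\<lambda>n t. indicator {s<..real n} t * g t)"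
    by (intro incseq_SucI le_funI) (auto simp: indicator_def)
  have "(\<integral>\<^sup>+t. indicator {s<..} t * g t \<partial>lborel) = (\<integral>\<^sup>+t. (SUP n. indicator {s<..real n} t * g t) \<partial>lborel)"
  proof (intro nn_integral_cong)
    fix t :: real
    show "indicator {s<..} t * g t = (SUP n. indicator {s<..real n} t * g t)"
    proof (cases "s < t")
      case True
      obtain N :: nat where N: "t \<le> real N" using real_arch_simple by blast
      have "(SUP n. indicator {s<..real n} t * g t) = g t"
      proof (rule antisym)
        show "(SUP n. indicator {s<..real n} t * g t) \<le> g t"
          by (rule SUP_least) (simp add: indicator_def)
        have "g t = indicator {s<..real N} t * g t" using True N by simp
        also have "\<dots> \<le> (SUP n. indicator {s<..real n} t * g t)" by (rule SUP_upper) simp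
        finally show "g t \<le> (SUP n. indicator {s<..real n} t * g t)" .
      qed
      then show ?thesis using True by simp
    qed simp
  qed
  also have "\<dots> = (SUP n. \<integral>\<^sup>+t. indicator {s<..real n} t * g t \<partial>lborel)"
    by (rule nn_integral_monotone_convergence_SUP[OF inc]) measurable
  finally show ?thesis .
qed

lemma K_bounds:
  fixes u :: "real \<Rightarrow> real"
  assumes um: "posf u \<in> borel_measurable borel"
    and nn: "\<And>t. 0 < t \<Longrightarrow> 0 \<le> u t" and dec: "decreasing_pos u"
    and lim: "(u \<longlongrightarrow> 0) at_top" and s: "0 < s"
  shows "(\<integral>\<^sup>+t. indicator {s<..} t * ennreal ((u t - u (2 * t)) / t) \<partial>lborel) \<le> ennreal (u s)"
    and "ennreal (u (2 * s) / 2) \<le> (\<integral>\<^sup>+t. indicator {s<..} t * ennreal ((u t - u (2 * t)) / t) \<partial>lborel)"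
proof -
  define up where "up = posf u"
  have upm[measurable]: "up \<in> borel_measurable lborel" using um unfolding up_def by (simp add: measurable_lborel1)
  have upu: "up t = u t" if "0 < t" for t using that unfolding up_def posf_def by simp
  have udec: "u y \<le> u x" if "0 < x" "x \<le> y" for x y using dec that unfolding decreasing_pos_def by blast
  define J where "J a b = (\<integral>\<^sup>+t. indicator {a<..b} t * ennreal (up t / t) \<partial>lborel)" for a b
  define P where "P R = (\<integral>\<^sup>+t. indicator {s<..R} t * ennreal ((up t - up (2 * t)) / t) \<partial>lborel)" for R
  define K where "K = (\<integral>\<^sup>+t. indicator {s<..} t * ennreal ((up t - up (2 * t)) / t) \<partial>lborel)"
  have K_eq: "K = (\<integral>\<^sup>+t. indicator {s<..} t * ennreal ((u t - u (2 * t)) / t) \<partial>lborel)"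
    unfolding K_def using s by (intro nn_integral_cong) (auto simp: indicator_def upu)
  have J_add: "J a c = J a b + J b c" if "a \<le> b" "b \<le> c" for a b c
  proof -
    have "J a b + J b c = (\<integral>\<^sup>+t. indicator {a<..b} t * ennreal (up t / t) + indicator {b<..c} t * ennreal (up t / t) \<partial>lborel)"
      unfolding J_def by (rule nn_integral_add[symmetric]) measurable
    also have "\<dots> = J a c" unfolding J_def
      using that by (intro nn_integral_cong) (auto simp: indicator_def)
    finally show ?thesis by simp
  qed
  have J_up: "J a b \<le> ennreal (u a / a) * ennreal (b - a)" if "0 < a" "a \<le> b" for a b
  proof -
    have "J a b \<le> (\<integral>\<^sup>+t. ennreal (u a / a) * indicator {a<..b} t \<partial>lborel)"
      unfolding J_def
    proof (intro nn_integral_mono)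
      fix t
      show "indicator {a<..b} t * ennreal (up t / t) \<le> ennreal (u a / a) * indicator {a<..b} t"
      proof (cases "t \<in> {a<..b}")
        case True
        then have "up t / t \<le> u a / a" using that nn[of t] udec[of a t] upu[of t]
          by (intro frac_le) auto
        then show ?thesis using True by (simp add: ennreal_leI)
      qed simp
    qed
    also have "\<dots> = ennreal (u a / a) * ennreal (b - a)"
      using that by (subst nn_integral_cmult_indicator) auto
    finally show ?thesis .
  qed
  have J_fin: "J a b < \<infinity>" if "0 < a" "a \<le> b" for a b
  proof -
    have "ennreal (u a / a) * ennreal (b - a) < \<infinity>"
      by (simp add: ennreal_mult_eq_top_iff less_top[symmetric])
    then show ?thesis using J_up[OF that] by (rule le_less_trans[rotated])
  qed
  have J_up2: "J a (2 * a) \<le> ennreal (u a)" if "0 < a" for a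
  proof -
    have "J a (2 * a) \<le> ennreal (u a / a) * ennreal (2 * a - a)" using J_up[of a "2 * a"] that by simp
    also have "\<dots> = ennreal (u a / a * a)" using that nn[of a] by (subst ennreal_mult) auto
    also have "\<dots> = ennreal (u a)" using that by simp
    finally show ?thesis .
  qed
  have J_low: "ennreal (u (2 * a) / 2) \<le> J a (2 * a)" if "0 < a" for a
  proof -
    have "ennreal (u (2 * a) / 2) = ennreal (u (2 * a) / (2 * a) * a)" using that by simp
    also have "\<dots> = ennreal (u (2 * a) / (2 * a)) * ennreal (2 * a - a)" using that nn[of "2 * a"] by (subst ennreal_mult) auto
    also have "\<dots> = (\<integral>\<^sup>+t. ennreal (u (2 * a) / (2 * a)) * indicator {a<..2 * a} t \<partial>lborel)"
      using that by (subst nn_integral_cmult_indicator) auto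
    also have "\<dots> \<le> J a (2 * a)"
      unfolding J_def
    proof (intro nn_integral_mono)
      fix t
      show "ennreal (u (2 * a) / (2 * a)) * indicator {a<..2 * a} t \<le> indicator {a<..2 * a} t * ennreal (up t / t)"
      proof (cases "t \<in> {a<..2 * a}")
        case True
        then have "u (2 * a) / (2 * a) \<le> up t / t" using that nn[of "2 * a"] udec[of t "2 * a"] upu[of t]
          by (intro frac_le) auto
        then show ?thesis using True by (simp add: ennreal_leI)
      qed simp
    qed
    finally show ?thesis .
  qed
  have subst: "(\<integral>\<^sup>+t. indicator {s<..R} t * ennreal (up (2 * t) / t) \<partial>lborel) = J (2 * s) (2 * R)" for R
  proof -
    have "J (2 * s) (2 * R) = ennreal \<bar>2\<bar> * (\<integral>\<^sup>+t. indicator {2 * s<..2 * R} (0 + 2 * t) * ennreal (up (0 + 2 * t) / (0 + 2 * t)) \<partial>lborel)"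
      unfolding J_def by (rule nn_integral_real_affine) auto
    also have "\<dots> = (\<integral>\<^sup>+t. ennreal 2 * (indicator {s<..R} t * ennreal (up (2 * t) / (2 * t))) \<partial>lborel)"
      by (subst nn_integral_cmult) (auto simp: indicator_def)
    also have "\<dots> = (\<integral>\<^sup>+t. indicator {s<..R} t * ennreal (up (2 * t) / t) \<partial>lborel)"
    proof (intro nn_integral_cong)
      fix t
      have e1: "up (2 * t) / t = 2 * (up (2 * t) / (2 * t))" by simp
      have "ennreal (up (2 * t) / t) = ennreal (2 * (up (2 * t) / (2 * t)))" by (subst e1) (rule refl)
      also have "\<dots> = ennreal 2 * ennreal (up (2 * t) / (2 * t))" by (rule ennreal_mult') simp
      finally have "ennreal 2 * ennreal (up (2 * t) / (2 * t)) = ennreal (up (2 * t) / t)" by simp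
      then show "ennreal 2 * (indicator {s<..R} t * ennreal (up (2 * t) / (2 * t))) = indicator {s<..R} t * ennreal (up (2 * t) / t)"
        by (simp add: indicator_def)
    qed
    finally show ?thesis by simp
  qed
  have split: "P R + (\<integral>\<^sup>+t. indicator {s<..R} t * ennreal (up (2 * t) / t) \<partial>lborel) = J s R" for R
  proof -
    have "P R + (\<integral>\<^sup>+t. indicator {s<..R} t * ennreal (up (2 * t) / t) \<partial>lborel)
        = (\<integral>\<^sup>+t. indicator {s<..R} t * ennreal ((up t - up (2 * t)) / t) + indicator {s<..R} t * ennreal (up (2 * t) / t) \<partial>lborel)"
      unfolding P_def by (rule nn_integral_add[symmetric]) measurable
    also have "\<dots> = J s R" unfolding J_def
    proof (intro nn_integral_cong)
      fix t
      show "indicator {s<..R} t * ennreal ((up t - up (2 * t)) / t) + indicator {s<..R} t * ennreal (up (2 * t) / t) = indicator {s<..R} t * ennreal (up t / t)"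
      proof (cases "t \<in> {s<..R}")
        case True
        then have t0: "0 < t" using s by simp
        have a: "0 \<le> (up t - up (2 * t)) / t" using t0 udec[of t "2 * t"] upu[of t] upu[of "2 * t"] by simp
        have b: "0 \<le> up (2 * t) / t" using t0 nn[of "2 * t"] upu[of "2 * t"] by simp
        have "ennreal ((up t - up (2 * t)) / t) + ennreal (up (2 * t) / t) = ennreal ((up t - up (2 * t)) / t + up (2 * t) / t)"
          using a b by simp
        also have "(up t - up (2 * t)) / t + up (2 * t) / t = up t / t" by (simp add: diff_divide_distrib)
        finally show ?thesis using True by simp
      qed simp
    qed
    finally show ?thesis .
  qed
  have key: "P R + J R (2 * R) = J s (2 * s)" if R: "2 * s \<le> R" for R
  proof -
    have "J (2 * s) R + (P R + J R (2 * R)) = P R + J (2 * s) (2 * R)"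
      using J_add[of "2 * s" R "2 * R"] R s by (simp add: ac_simps)
    also have "\<dots> = J s R" using split[of R] subst[of R] by simp
    also have "\<dots> = J (2 * s) R + J s (2 * s)" using J_add[of s "2 * s" R] R s by (simp add: ac_simps)
    finally have "J (2 * s) R + (P R + J R (2 * R)) = J (2 * s) R + J s (2 * s)" .
    moreover have "J (2 * s) R \<noteq> \<infinity>" using J_fin[of "2 * s" R] s R by simp
    ultimately show ?thesis by (simp add: ennreal_add_left_cancel)
  qed
  have Pmono: "P R1 \<le> P R2" if "R1 \<le> R2" for R1 R2
    unfolding P_def using that by (intro nn_integral_mono) (auto simp: indicator_def)
  have PK: "P R \<le> K" for R
    unfolding P_def K_def by (intro nn_integral_mono) (auto simp: indicator_def)
  have "K = (SUP n. P (real n))"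
    unfolding K_def P_def by (rule nn_integral_Ioi_SUP) measurable
  also have "\<dots> \<le> ennreal (u s)"
  proof (rule SUP_least)
    fix n :: nat
    have "P (real n) \<le> P (max (real n) (2 * s))" by (rule Pmono) simp
    also have "\<dots> \<le> J s (2 * s)" using key[of "max (real n) (2 * s)"] by (metis le_iff_add max.cobounded2)
    also have "\<dots> \<le> ennreal (u s)" using J_up2 s by simp
    finally show "P (real n) \<le> ennreal (u s)" .
  qed
  finally show "(\<integral>\<^sup>+t. indicator {s<..} t * ennreal ((u t - u (2 * t)) / t) \<partial>lborel) \<le> ennreal (u s)"
    using K_eq by simp
  have "ennreal (u (2 * s) / 2) \<le> K"
  proof (rule ennreal_le_epsilon)
    fix e :: real assume e: "0 < e"
    have "eventually (\<lambda>R. u R < e) at_top" using lim e by (rule order_tendstoD)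
    then obtain R0 where R0: "\<And>R. R \<ge> R0 \<Longrightarrow> u R < e" by (auto simp: eventually_at_top_linorder)
    define R where "R = max R0 (2 * s)"
    have R: "2 * s \<le> R" "R0 \<le> R" "0 < R" using s unfolding R_def by auto
    have "ennreal (u (2 * s) / 2) \<le> J s (2 * s)" using J_low s by simp
    also have "\<dots> = P R + J R (2 * R)" using key[OF R(1)] by simp
    also have "\<dots> \<le> K + ennreal (u R)" using PK J_up2[OF R(3)] by (intro add_mono) auto
    also have "\<dots> \<le> K + ennreal e" using R0[OF R(2)] by (intro add_mono) (auto intro: ennreal_leI)
    finally show "ennreal (u (2 * s) / 2) \<le> K + ennreal e" .
  qed
  then show "ennreal (u (2 * s) / 2) \<le> (\<integral>\<^sup>+t. indicator {s<..} t * ennreal ((u t - u (2 * t)) / t) \<partial>lborel)"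
    using K_eq by simp
qed

lemma lambda_pos: "lambda_norm w f = (\<integral>\<^sup>+t. rearr f t * ennreal (posf w t) \<partial>lborel)"
  unfolding lambda_norm_def by (intro nn_integral_cong) (simp add: posf_def indicator_def)

lemma gamma_pos: "gamma_norm v f = (\<integral>\<^sup>+t. maxfun f t * ennreal (posf v t) \<partial>lborel)"
  unfolding gamma_norm_def by (intro nn_integral_cong) (simp add: posf_def indicator_def)

lemma weight_posf_meas:
  assumes "weight w" shows "posf w \<in> borel_measurable borel"
proof -
  have "(\<lambda>x. indicator {0<..} x *\<^sub>R w x) \<in> borel_measurable lborel"
    using assms unfolding weight_def set_borel_measurable_def by simp
  moreover have "(\<lambda>x. indicator {0<..} x *\<^sub>R w x) = posf w"
    by (auto simp: posf_def indicator_def fun_eq_iff)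
  ultimately show ?thesis by (simp add: measurable_lborel1)
qed

lemma gamma_fubini:
  fixes f :: "'a::euclidean_space \<Rightarrow> real" and v :: "real \<Rightarrow> real"
  assumes vm[measurable]: "posf v \<in> borel_measurable borel"
  shows "gamma_norm v f = (\<integral>\<^sup>+s. rearr f s * indicator {0<..} s * (\<integral>\<^sup>+t. indicator {s<..} t * ennreal (posf v t / t) \<partial>lborel) \<partial>lborel)"
proof -
  define F where "F t s = rearr f s * (if 0 < s \<and> s < t then 1 else 0) * ennreal (posf v t / t)" for t s :: real
  have Fm: "case_prod (\<lambda>s t. F t s) \<in> borel_measurable (lborel \<Otimes>\<^sub>M lborel)"
    unfolding F_def by measurable
  have "gamma_norm v f = (\<integral>\<^sup>+t. (\<integral>\<^sup>+s. F t s \<partial>lborel) \<partial>lborel)"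
    unfolding gamma_pos
  proof (intro nn_integral_cong)
    fix t :: real
    show "maxfun f t * ennreal (posf v t) = (\<integral>\<^sup>+s. F t s \<partial>lborel)"
    proof (cases "0 < t")
      case True
      have "maxfun f t * ennreal (posf v t) = (\<integral>\<^sup>+s. rearr f s * indicator {0<..<t} s \<partial>lborel) * (ennreal (1 / t) * ennreal (posf v t))"
        unfolding maxfun_def by (simp add: ac_simps)
      also have "ennreal (1 / t) * ennreal (posf v t) = ennreal (posf v t / t)"
        using True by (subst ennreal_mult'[symmetric]) auto
      also have "(\<integral>\<^sup>+s. rearr f s * indicator {0<..<t} s \<partial>lborel) * ennreal (posf v t / t)
          = (\<integral>\<^sup>+s. rearr f s * indicator {0<..<t} s * ennreal (posf v t / t) \<partial>lborel)"
        by (rule nn_integral_multc[symmetric]) measurable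
      also have "\<dots> = (\<integral>\<^sup>+s. F t s \<partial>lborel)"
        unfolding F_def by (intro nn_integral_cong) (simp add: indicator_def)
      finally show ?thesis .
    next
      case False
      then have "F t s = 0" for s unfolding F_def by auto
      then show ?thesis using False by (simp add: posf_def)
    qed
  qed
  also have "\<dots> = (\<integral>\<^sup>+s. (\<integral>\<^sup>+t. F t s \<partial>lborel) \<partial>lborel)"
    by (rule lborel_pair.Fubini'[OF Fm])
  also have "\<dots> = (\<integral>\<^sup>+s. rearr f s * indicator {0<..} s * (\<integral>\<^sup>+t. indicator {s<..} t * ennreal (posf v t / t) \<partial>lborel) \<partial>lborel)"
  proof (intro nn_integral_cong)
    fix s :: real
    have "(\<integral>\<^sup>+t. F t s \<partial>lborel) = (\<integral>\<^sup>+t. (rearr f s * indicator {0<..} s) * (indicator {s<..} t * ennreal (posf v t / t)) \<partial>lborel)"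
      unfolding F_def by (intro nn_integral_cong) (auto simp: indicator_def)
    also have "\<dots> = rearr f s * indicator {0<..} s * (\<integral>\<^sup>+t. indicator {s<..} t * ennreal (posf v t / t) \<partial>lborel)"
      by (rule nn_integral_cmult) measurable
    finally show "(\<integral>\<^sup>+t. F t s \<partial>lborel) = rearr f s * indicator {0<..} s * (\<integral>\<^sup>+t. indicator {s<..} t * ennreal (posf v t / t) \<partial>lborel)" .
  qed
  finally show ?thesis .
qed

lemma weight_v:
  assumes wt: "weight w" and dec: "decreasing_pos w"
  shows "weight (\<lambda>t. w t - w (2 * t))"
proof -
  have nn: "0 \<le> w t" if "0 < t" for t using wt that unfolding weight_def by auto
  have wm[measurable]: "posf w \<in> borel_measurable borel" by (rule weight_posf_meas[OF wt])
  have eq: "(\<lambda>x. indicator {0<..} x *\<^sub>R (w x - w (2 * x))) = (\<lambda>x. posf w x - posf w (2 * x))"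
    by (auto simp: posf_def indicator_def fun_eq_iff)
  have m: "(\<lambda>x. posf w x - posf w (2 * x)) \<in> borel_measurable lborel" by measurable
  have nnv: "0 \<le> w t - w (2 * t)" if "0 < t" for t
    using dec that unfolding decreasing_pos_def by simp
  have "(\<integral>\<^sup>+ s\<in>{0<..<t}. ennreal (w s - w (2 * s)) \<partial>lborel) \<le> (\<integral>\<^sup>+ s\<in>{0<..<t}. ennreal (w s) \<partial>lborel)" for t
  proof (intro nn_integral_mono)
    fix s
    show "ennreal (w s - w (2 * s)) * indicator {0<..<t} s \<le> ennreal (w s) * indicator {0<..<t} s"
    proof (cases "s \<in> {0<..<t}")
      case True
      then have "0 \<le> w (2 * s)" using nn[of "2 * s"] by simp
      then show ?thesis using True by (simp add: ennreal_leI)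
    qed simp
  qed
  note le = this
  show ?thesis unfolding weight_def set_borel_measurable_def
  proof (intro conjI allI impI)
    show "(\<lambda>x. indicator {0<..} x *\<^sub>R (w x - w (2 * x))) \<in> borel_measurable lborel"
      using m eq by simp
  next
    fix t :: real assume "0 < t" then show "0 \<le> w t - w (2 * t)" by (rule nnv)
  next
    fix t :: real assume "0 < t"
    then have "(\<integral>\<^sup>+ s\<in>{0<..<t}. ennreal (w s) \<partial>lborel) < \<infinity>" using wt unfolding weight_def by auto
    then show "(\<integral>\<^sup>+ s\<in>{0<..<t}. ennreal (w s - w (2 * s)) \<partial>lborel) < \<infinity>"
      using le[of t] by (rule le_less_trans[rotated])
  qed
qed

lemma construction:
  fixes w :: "real \<Rightarrow> real" and f :: "'a::euclidean_space \<Rightarrow> real"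
  assumes wt: "weight w" and dec: "decreasing_pos w" and f[measurable]: "f \<in> borel_measurable lebesgue"
  shows "gamma_norm (\<lambda>t. w t - w (2 * t)) f \<le> lambda_norm w f"
    and "lambda_norm w f \<le> 4 * gamma_norm (\<lambda>t. w t - w (2 * t)) f + ennreal (winf w) * L1_norm f"
proof -
  define c where "c = winf w"
  define v where "v = (\<lambda>t. w t - w (2 * t))"
  define u where "u = (\<lambda>t. w t - c)"
  have nn: "0 \<le> w t" if "0 < t" for t using wt that unfolding weight_def by auto
  note wp = winf_props[OF dec nn]
  have cle: "c \<le> w t" if "0 < t" for t using wp(2) that unfolding c_def by simp
  have c0: "0 \<le> c" using wp(3) unfolding c_def by simp
  have wm[measurable]: "posf w \<in> borel_measurable borel" by (rule weight_posf_meas[OF wt])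
  have um: "posf u \<in> borel_measurable borel"
  proof -
    have "posf u = (\<lambda>t. posf w t - (if 0 < t then c else 0))"
      by (auto simp: posf_def u_def fun_eq_iff)
    moreover have "(\<lambda>t. posf w t - (if 0 < t then c else 0)) \<in> borel_measurable borel" by measurable
    ultimately show ?thesis by simp
  qed
  have unn: "0 \<le> u t" if "0 < t" for t using cle[OF that] unfolding u_def by simp
  have udec: "decreasing_pos u" using dec unfolding decreasing_pos_def u_def by auto
  have ulim: "(u \<longlongrightarrow> 0) at_top"
  proof -
    have "((\<lambda>t. w t - c) \<longlongrightarrow> c - c) at_top" using wp(1) unfolding c_def by (intro tendsto_diff) auto
    then show ?thesis unfolding u_def by simp
  qed
  have vm[measurable]: "posf v \<in> borel_measurable borel"
  proof -
    have "posf v = (\<lambda>t. posf w t - posf w (2 * t))"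
      by (auto simp: posf_def v_def fun_eq_iff)
    moreover have "(\<lambda>t. posf w t - posf w (2 * t)) \<in> borel_measurable borel" by measurable
    ultimately show ?thesis by simp
  qed
  define K where "K s = (\<integral>\<^sup>+t. indicator {s<..} t * ennreal (posf v t / t) \<partial>lborel)" for s
  have Keq: "K s = (\<integral>\<^sup>+t. indicator {s<..} t * ennreal ((u t - u (2 * t)) / t) \<partial>lborel)" if "0 < s" for s
    unfolding K_def using that
    by (intro nn_integral_cong) (auto simp: indicator_def posf_def v_def u_def)
  have K1: "K s \<le> ennreal (u s)" if "0 < s" for s
    using K_bounds(1)[OF um unn udec ulim that] Keq[OF that] by simp
  have K2: "ennreal (u (2 * s) / 2) \<le> K s" if "0 < s" for s
    using K_bounds(2)[OF um unn udec ulim that] Keq[OF that] by simp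
  have Km[measurable]: "K \<in> borel_measurable borel"
    by (rule antimono_borel) (auto simp: K_def indicator_def intro!: nn_integral_mono)
  have G: "gamma_norm v f = (\<integral>\<^sup>+s. rearr f s * indicator {0<..} s * K s \<partial>lborel)"
    unfolding K_def by (rule gamma_fubini[OF vm])
  have "gamma_norm v f \<le> (\<integral>\<^sup>+s. rearr f s * ennreal (posf w s) \<partial>lborel)"
    unfolding G
  proof (intro nn_integral_mono)
    fix s :: real
    show "rearr f s * indicator {0<..} s * K s \<le> rearr f s * ennreal (posf w s)"
    proof (cases "0 < s")
      case True
      have "ennreal (w s - c) \<le> ennreal (w s)" using c0 by (intro ennreal_leI) simp
      then have "K s \<le> ennreal (w s)" using K1[OF True] unfolding u_def by (rule order_trans[rotated])
      then show ?thesis using True by (auto simp: posf_def intro: mult_left_mono)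
    qed simp
  qed
  then show "gamma_norm (\<lambda>t. w t - w (2 * t)) f \<le> lambda_norm w f"
    unfolding v_def lambda_pos by simp
  have "lambda_norm w f = (\<integral>\<^sup>+t. rearr f t * ennreal (posf u t) + ennreal c * (rearr f t * indicator {0<..} t) \<partial>lborel)"
    unfolding lambda_pos
  proof (intro nn_integral_cong)
    fix t :: real
    show "rearr f t * ennreal (posf w t) = rearr f t * ennreal (posf u t) + ennreal c * (rearr f t * indicator {0<..} t)"
    proof (cases "0 < t")
      case True
      have "ennreal (w t) = ennreal (u t) + ennreal c"
        using unn[OF True] c0 unfolding u_def by (subst ennreal_plus[symmetric]) auto
      then show ?thesis using True by (simp add: posf_def distrib_left ac_simps)
    qed (simp add: posf_def)
  qed
  also have "\<dots> = (\<integral>\<^sup>+t. rearr f t * ennreal (posf u t) \<partial>lborel) + (\<integral>\<^sup>+t. ennreal c * (rearr f t * indicator {0<..} t) \<partial>lborel)"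
    using um by (intro nn_integral_add) (auto simp: measurable_lborel1)
  also have "(\<integral>\<^sup>+t. ennreal c * (rearr f t * indicator {0<..} t) \<partial>lborel) = ennreal c * L1_norm f"
    unfolding L1_rearr[OF f] by (rule nn_integral_cmult) measurable
  also have "(\<integral>\<^sup>+t. rearr f t * ennreal (posf u t) \<partial>lborel) \<le> 4 * gamma_norm v f"
  proof -
    have umm[measurable]: "posf u \<in> borel_measurable lborel" using um by (simp add: measurable_lborel1)
    have "(\<integral>\<^sup>+t. rearr f t * ennreal (posf u t) \<partial>lborel)
        = ennreal \<bar>2\<bar> * (\<integral>\<^sup>+x. rearr f (0 + 2 * x) * ennreal (posf u (0 + 2 * x)) \<partial>lborel)"
      by (rule nn_integral_real_affine) auto
    also have "\<dots> \<le> ennreal 2 * (\<integral>\<^sup>+x. 2 * (rearr f x * indicator {0<..} x * K x) \<partial>lborel)"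
      unfolding abs_numeral
    proof (intro mult_left_mono nn_integral_mono)
      fix x :: real
      show "rearr f (0 + 2 * x) * ennreal (posf u (0 + 2 * x)) \<le> 2 * (rearr f x * indicator {0<..} x * K x)"
      proof (cases "0 < x")
        case True
        have r: "rearr f (2 * x) \<le> rearr f x" using True by (intro rearr_antimono) simp
        have "ennreal (u (2 * x)) = ennreal (2 * (u (2 * x) / 2))" by simp
        also have "\<dots> = ennreal 2 * ennreal (u (2 * x) / 2)" by (rule ennreal_mult') simp
        also have "\<dots> = 2 * ennreal (u (2 * x) / 2)" by simp
        also have "\<dots> \<le> 2 * K x" using K2[OF True] by (rule mult_left_mono) simp
        finally have "ennreal (posf u (2 * x)) \<le> 2 * K x" using True by (simp add: posf_def)
        then have "rearr f (2 * x) * ennreal (posf u (2 * x)) \<le> rearr f x * (2 * K x)"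
          using r by (intro mult_mono) auto
        then show ?thesis using True by (simp add: ac_simps)
      qed (simp add: posf_def)
    qed auto
    also have "\<dots> = 4 * gamma_norm v f"
      unfolding G by (subst nn_integral_cmult) (auto simp: mult.assoc[symmetric])
    finally show ?thesis .
  qed
  finally show "lambda_norm w f \<le> 4 * gamma_norm (\<lambda>t. w t - w (2 * t)) f + ennreal (winf w) * L1_norm f"
    unfolding c_def v_def by (auto intro: add_mono)
qed

lemma lambda_le_L1:
  fixes f :: "'a::euclidean_space \<Rightarrow> real"
  assumes f[measurable]: "f \<in> borel_measurable lebesgue" and B: "\<And>t. 0 < t \<Longrightarrow> w t \<le> B"
  shows "lambda_norm w f \<le> ennreal B * L1_norm f"
proof -
  have "lambda_norm w f \<le> (\<integral>\<^sup>+t. ennreal B * (rearr f t * indicator {0<..} t) \<partial>lborel)"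
    unfolding lambda_norm_def
  proof (intro nn_integral_mono)
    fix t :: real
    show "rearr f t * ennreal (w t) * indicator {0<..} t \<le> ennreal B * (rearr f t * indicator {0<..} t)"
    proof (cases "0 < t")
      case True
      then have "ennreal (w t) \<le> ennreal B" using B by (intro ennreal_leI) auto
      then have "rearr f t * ennreal (w t) \<le> rearr f t * ennreal B" by (rule mult_left_mono) simp
      then show ?thesis using True by (simp add: mult.commute)
    qed simp
  qed
  also have "\<dots> = ennreal B * L1_norm f"
    unfolding L1_rearr[OF f] by (rule nn_integral_cmult) measurable
  finally show ?thesis .
qed

lemma L1_le_lambda:
  fixes f :: "'a::euclidean_space \<Rightarrow> real"
  assumes f[measurable]: "f \<in> borel_measurable lebesgue" and c: "\<And>t. 0 < t \<Longrightarrow> c \<le> w t"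
  shows "ennreal c * L1_norm f \<le> lambda_norm w f"
proof -
  have "ennreal c * L1_norm f = (\<integral>\<^sup>+t. ennreal c * (rearr f t * indicator {0<..} t) \<partial>lborel)"
    unfolding L1_rearr[OF f] by (rule nn_integral_cmult[symmetric]) measurable
  also have "\<dots> \<le> lambda_norm w f"
    unfolding lambda_norm_def
  proof (intro nn_integral_mono)
    fix t :: real
    show "ennreal c * (rearr f t * indicator {0<..} t) \<le> rearr f t * ennreal (w t) * indicator {0<..} t"
    proof (cases "0 < t")
      case True
      then have "ennreal c \<le> ennreal (w t)" using c by (intro ennreal_leI) auto
      then have "rearr f t * ennreal c \<le> rearr f t * ennreal (w t)" by (rule mult_left_mono) simp
      then show ?thesis using True by (simp add: mult.commute)
    qed simp
  qed
  finally show ?thesis .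
qed

definition indf :: "real \<Rightarrow> 'a::euclidean_space \<Rightarrow> real" where
  "indf a = indicator (cbox 0 (\<Sum>b\<in>Basis. root DIM('a) a *\<^sub>R b))"

lemma indf_props:
  assumes a: "0 < a"
  shows "(indf a :: 'a::euclidean_space \<Rightarrow> real) \<in> borel_measurable lebesgue"
    and "\<And>t. 0 \<le> t \<Longrightarrow> rearr (indf a :: 'a \<Rightarrow> real) t = (if t < a then 1 else 0)"
    and "L1_norm (indf a :: 'a \<Rightarrow> real) = ennreal a"
proof -
  define r where "r = root DIM('a) a"
  define E where "E = cbox (0::'a) (\<Sum>b\<in>Basis. r *\<^sub>R b)"
  have r0: "0 \<le> r" unfolding r_def using a by simp
  have Eb: "E \<in> sets lborel" unfolding E_def by simp
  have "emeasure lborel E = ennreal (\<Prod>b\<in>(Basis::'a set). r)"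
    unfolding E_def emeasure_lborel_cbox_eq using r0 by (simp add: inner_sum_left_Basis)
  also have "(\<Prod>b\<in>(Basis::'a set). r) = a" unfolding r_def using a by simp
  finally have mE: "emeasure lebesgue E = ennreal a" using Eb by simp
  have ie: "indf a = (indicator E :: 'a \<Rightarrow> real)" unfolding indf_def E_def r_def ..
  show meas: "(indf a :: 'a \<Rightarrow> real) \<in> borel_measurable lebesgue"
    unfolding ie using Eb by (intro borel_measurable_indicator) simp
  have dist: "distrib_fun (indf a :: 'a \<Rightarrow> real) \<sigma> = (if \<sigma> < 1 then ennreal a else 0)" for \<sigma>
  proof (cases "\<sigma> < 1")
    case True
    then have "{x. \<sigma> < ennreal \<bar>indf a x\<bar>} = E" unfolding ie by (auto simp: indicator_def)
    then show ?thesis using True mE unfolding distrib_fun_def by simp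
  next
    case False
    have le1: "ennreal \<bar>indf a x\<bar> \<le> 1" for x :: 'a unfolding ie by (simp add: indicator_def)
    have "{x. \<sigma> < ennreal \<bar>(indf a :: 'a \<Rightarrow> real) x\<bar>} = {}"
    proof (safe)
      fix x :: 'a assume "\<sigma> < ennreal \<bar>indf a x\<bar>"
      moreover have "ennreal \<bar>indf a x\<bar> \<le> \<sigma>" using le1[of x] False by (simp add: not_less del: ennreal_le_1)
      ultimately show "x \<in> {}" by simp
    qed
    then show ?thesis using False unfolding distrib_fun_def by simp
  qed
  show "rearr (indf a :: 'a \<Rightarrow> real) t = (if t < a then 1 else 0)" if t: "0 \<le> t" for t
  proof (cases "t < a")
    case True
    then have "{s. distrib_fun (indf a :: 'a \<Rightarrow> real) s \<le> ennreal t} = {1..}"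
      using t a by (auto simp: dist not_less ennreal_le_iff)
    then show ?thesis using True unfolding rearr_def by simp
  next
    case False
    then have "{s. distrib_fun (indf a :: 'a \<Rightarrow> real) s \<le> ennreal t} = UNIV"
      using t a by (auto simp: dist ennreal_leI)
    then show ?thesis using False unfolding rearr_def by (simp add: bot_ennreal)
  qed
  show "L1_norm (indf a :: 'a \<Rightarrow> real) = ennreal a"
  proof -
    have "L1_norm (indf a :: 'a \<Rightarrow> real) = (\<integral>\<^sup>+x. indicator E x \<partial>lebesgue)"
      unfolding L1_norm_def ie by (intro nn_integral_cong) (simp add: indicator_def)
    also have "\<dots> = emeasure lebesgue E" using Eb by (intro nn_integral_indicator) simp
    finally show ?thesis using mE by simp
  qed
qed

lemma lambda_indf:
  assumes a: "0 < a"
  shows "lambda_norm w (indf a :: 'a::euclidean_space \<Rightarrow> real) = (\<integral>\<^sup>+t. ennreal (posf w t) * indicator {0<..<a} t \<partial>lborel)"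
  unfolding lambda_norm_def
  using indf_props(2)[OF a, where 'a='a]
  by (intro nn_integral_cong) (auto simp: indicator_def posf_def)

lemma maxfun_indf:
  assumes a: "0 < a" and t: "0 < t"
  shows "maxfun (indf a :: 'a::euclidean_space \<Rightarrow> real) t = ennreal (min t a / t)"
proof -
  have "(\<integral>\<^sup>+s. rearr (indf a :: 'a \<Rightarrow> real) s * indicator {0<..<t} s \<partial>lborel) = (\<integral>\<^sup>+s. indicator {0<..<min t a} s \<partial>lborel)"
    using indf_props(2)[OF a, where 'a='a]
    by (intro nn_integral_cong) (auto simp: indicator_def)
  also have "\<dots> = ennreal (min t a)" using a t by simp
  finally have "maxfun (indf a :: 'a \<Rightarrow> real) t = ennreal (1 / t) * ennreal (min t a)"
    unfolding maxfun_def by simp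
  also have "\<dots> = ennreal (1 / t * min t a)" using t by (subst ennreal_mult') auto
  finally show ?thesis by simp
qed

lemma gamma_indf:
  assumes a: "0 < a"
  shows "gamma_norm v (indf a :: 'a::euclidean_space \<Rightarrow> real) = (\<integral>\<^sup>+t. ennreal (min t a / t) * ennreal (posf v t) \<partial>lborel)"
  unfolding gamma_pos
  using maxfun_indf[OF a, where 'a='a]
  by (intro nn_integral_cong) (auto simp: posf_def)

lemma bdd_from_incl:
  assumes dec: "decreasing_pos w"
    and H: "\<forall>f \<in> borel_measurable lebesgue. lambda_norm w f \<le> ennreal D * L1_norm (f :: 'a::euclidean_space \<Rightarrow> real)"
    and t: "0 < t" and D: "0 \<le> D"
  shows "w t \<le> D"
proof -
  have "ennreal (w t) * ennreal t = (\<integral>\<^sup>+s. ennreal (w t) * indicator {0<..<t} s \<partial>lborel)"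
    using t by (subst nn_integral_cmult_indicator) auto
  also have "\<dots> \<le> lambda_norm w (indf t :: 'a \<Rightarrow> real)"
    unfolding lambda_indf[OF t]
  proof (intro nn_integral_mono)
    fix s :: real
    show "ennreal (w t) * indicator {0<..<t} s \<le> ennreal (posf w s) * indicator {0<..<t} s"
      using dec unfolding decreasing_pos_def by (auto simp: indicator_def posf_def intro: ennreal_leI)
  qed
  also have "\<dots> \<le> ennreal D * L1_norm (indf t :: 'a \<Rightarrow> real)"
    using H indf_props(1)[OF t, where 'a='a] by blast
  also have "\<dots> = ennreal D * ennreal t" using indf_props(3)[OF t, where 'a='a] by simp
  finally have le: "ennreal (w t) * ennreal t \<le> ennreal D * ennreal t" .
  have "ennreal (w t) \<le> ennreal D"
  proof -
    have "ennreal t * ennreal (w t) \<le> ennreal t * ennreal D" using le by (simp add: mult.commute)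
    then show ?thesis using t by (subst (asm) ennreal_mult_le_mult_iff) auto
  qed
  then show ?thesis
    using D by (simp add: ennreal_le_iff)
qed

lemma pos_from_incl:
  assumes wt: "weight w" and dec: "decreasing_pos w" and C: "0 < C"
    and H: "\<forall>f \<in> borel_measurable lebesgue. L1_norm (f :: 'a::euclidean_space \<Rightarrow> real) \<le> ennreal C * lambda_norm w f"
  shows "winf w > 0"
proof (rule ccontr)
  assume "\<not> winf w > 0"
  have nn: "0 \<le> w t" if "0 < t" for t using wt that unfolding weight_def by auto
  note wp = winf_props[OF dec nn]
  have w0: "winf w = 0" using wp(3) \<open>\<not> winf w > 0\<close> by simp
  have wm[measurable]: "posf w \<in> borel_measurable lborel"
    using weight_posf_meas[OF wt] by (simp add: measurable_lborel1)
  have "eventually (\<lambda>t. w t < 1 / (2 * C)) at_top"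
    using wp(1) w0 C by (intro order_tendstoD) auto
  then obtain N where N: "\<And>t. t \<ge> N \<Longrightarrow> w t < 1 / (2 * C)" by (auto simp: eventually_at_top_linorder)
  define t0 where "t0 = max N 1"
  have t0: "0 < t0" "w t0 < 1 / (2 * C)" using N[of t0] unfolding t0_def by auto
  define I1 where "I1 = (\<integral>\<^sup>+s. ennreal (posf w s) * indicator {0<..<t0} s \<partial>lborel)"
  have "I1 = (\<integral>\<^sup>+ s\<in>{0<..<t0}. ennreal (w s) \<partial>lborel)"
    unfolding I1_def by (intro nn_integral_cong) (auto simp: indicator_def posf_def)
  then have "I1 < \<infinity>" using wt t0 unfolding weight_def by auto
  then obtain i1 where i1: "I1 = ennreal i1" "0 \<le> i1" by (cases I1) auto
  define a where "a = 2 * C * i1 + 1"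
  have "0 \<le> 2 * C * i1" using C i1 by simp
  then have a0: "0 < a" unfolding a_def by linarith
  have "ennreal a = L1_norm (indf a :: 'a \<Rightarrow> real)" using indf_props(3)[OF a0, where 'a='a] by simp
  also have "\<dots> \<le> ennreal C * lambda_norm w (indf a :: 'a \<Rightarrow> real)"
    using H indf_props(1)[OF a0, where 'a='a] by blast
  finally have first: "ennreal a \<le> ennreal C * lambda_norm w (indf a :: 'a \<Rightarrow> real)" .
  have "lambda_norm w (indf a :: 'a \<Rightarrow> real) \<le> (\<integral>\<^sup>+s. ennreal (posf w s) * indicator {0<..<t0} s + ennreal (w t0) * indicator {0<..<a} s \<partial>lborel)"
    unfolding lambda_indf[OF a0]
  proof (intro nn_integral_mono)
    fix s :: real
    show "ennreal (posf w s) * indicator {0<..<a} s \<le> ennreal (posf w s) * indicator {0<..<t0} s + ennreal (w t0) * indicator {0<..<a} s"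
    proof (cases "s \<in> {0<..<a}")
      case True
      show ?thesis
      proof (cases "s < t0")
        case True2: True
        then show ?thesis using True by (simp add: indicator_def)
      next
        case False
        then have "t0 \<le> s" by simp
        then have "w s \<le> w t0" using dec t0(1) unfolding decreasing_pos_def by blast
        then show ?thesis using True False by (simp add: indicator_def posf_def ennreal_leI)
      qed
    qed simp
  qed
  also have "\<dots> = I1 + ennreal (w t0) * ennreal a"
    unfolding I1_def using a0 by (subst nn_integral_add) (auto simp: nn_integral_cmult_indicator)
  also have "\<dots> = ennreal (i1 + w t0 * a)"
    using i1 nn[OF t0(1)] a0 by (simp add: ennreal_mult'[symmetric])
  finally have L: "lambda_norm w (indf a :: 'a \<Rightarrow> real) \<le> ennreal (i1 + w t0 * a)" .
  have "ennreal a \<le> ennreal C * ennreal (i1 + w t0 * a)"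
    using first mult_left_mono[OF L, of "ennreal C"] by simp
  also have "\<dots> = ennreal (C * (i1 + w t0 * a))" by (rule ennreal_mult'[symmetric]) (use C in simp)
  finally have "ennreal a \<le> ennreal (C * (i1 + w t0 * a))" .
  then have le: "a \<le> C * (i1 + w t0 * a)"
    using C i1 nn[OF t0(1)] a0 by (subst (asm) ennreal_le_iff) auto
  have "C * (w t0 * a) \<le> C * (1 / (2 * C) * a)"
    using t0 C a0 by (intro mult_left_mono mult_right_mono) auto
  also have "\<dots> = a / 2" using C by simp
  finally have "a \<le> C * i1 + a / 2" using le by (simp add: distrib_left)
  then show False unfolding a_def using C i1 by (simp add: field_simps)
qed

lemma gamma_sublinear_False:
  assumes vt: "weight v" and e: "0 < \<epsilon>"
    and H: "\<And>a. 0 < a \<Longrightarrow> ennreal (\<epsilon> * a) \<le> gamma_norm v (indf a :: 'a::euclidean_space \<Rightarrow> real)"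
    and fin: "gamma_norm v (indf 1 :: 'a \<Rightarrow> real) < \<infinity>"
  shows False
proof -
  have vm[measurable]: "posf v \<in> borel_measurable lborel"
    using weight_posf_meas[OF vt] by (simp add: measurable_lborel1)
  define h where "h n t = ennreal (min (1 / (real n + 1)) (1 / t)) * ennreal (posf v t)" for n :: nat and t :: real
  have hm[measurable]: "h n \<in> borel_measurable lborel" for n unfolding h_def by measurable
  have gh: "gamma_norm v (indf (real n + 1) :: 'a \<Rightarrow> real) = ennreal (real n + 1) * (\<integral>\<^sup>+t. h n t \<partial>lborel)" for n
  proof -
    have "gamma_norm v (indf (real n + 1) :: 'a \<Rightarrow> real) = (\<integral>\<^sup>+t. ennreal (real n + 1) * h n t \<partial>lborel)"
      unfolding gamma_indf[of "real n + 1", simplified]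
    proof (intro nn_integral_cong)
      fix t :: real
      show "ennreal (min t (real n + 1) / t) * ennreal (posf v t) = ennreal (real n + 1) * h n t"
      proof (cases "0 < t")
        case True
        have "min t (real n + 1) / t = (real n + 1) * min (1 / (real n + 1)) (1 / t)"
        proof (cases "t \<le> real n + 1")
          case le: True
          then have "1 / (real n + 1) \<le> 1 / t" using True by (intro divide_left_mono) auto
          then show ?thesis using le True by (simp add: min_def)
        next
          case gt: False
          then have "\<not> 1 / (real n + 1) \<le> 1 / t" using True by (simp add: divide_le_cancel field_simps)
          then show ?thesis using gt True by (simp add: min_def)
        qed
        then show ?thesis unfolding h_def by (simp add: ennreal_mult' mult.assoc)
      qed (simp add: posf_def h_def)
    qed
    also have "\<dots> = ennreal (real n + 1) * (\<integral>\<^sup>+t. h n t \<partial>lborel)"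
      by (rule nn_integral_cmult) measurable
    finally show ?thesis .
  qed
  have eps: "ennreal \<epsilon> \<le> (\<integral>\<^sup>+t. h n t \<partial>lborel)" for n
  proof -
    have "ennreal (real n + 1) * ennreal \<epsilon> = ennreal (\<epsilon> * (real n + 1))"
      using ennreal_mult'[of \<epsilon> "real n + 1"] e by (metis less_imp_le mult.commute)
    also have "\<dots> \<le> ennreal (real n + 1) * (\<integral>\<^sup>+t. h n t \<partial>lborel)"
      using H[of "real n + 1"] gh[of n] by simp
    finally show ?thesis by (subst (asm) ennreal_mult_le_mult_iff) auto
  qed
  have dec: "decseq h"
  proof (intro decseq_SucI le_funI)
    fix n t
    have "min (1 / (real (Suc n) + 1)) (1 / t) \<le> min (1 / (real n + 1)) (1 / t)"
      by (intro min.mono order_refl divide_left_mono) auto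
    then show "h (Suc n) t \<le> h n t" unfolding h_def
      by (intro mult_right_mono ennreal_leI) auto
  qed
  have fin0: "(\<integral>\<^sup>+t. h 0 t \<partial>lborel) < \<infinity>"
    using gh[of 0] fin by simp
  have "(\<integral>\<^sup>+t. (INF n. h n t) \<partial>lborel) = (INF n. (\<integral>\<^sup>+t. h n t \<partial>lborel))"
    using dec fin0 by (intro nn_integral_monotone_convergence_INF_decseq) auto
  moreover have "(INF n. h n t) = 0" for t
  proof -
    define p where "p = max 0 (posf v t)"
    have "(INF n. h n t) \<le> 0"
    proof (rule ennreal_le_epsilon)
      fix d :: real assume d: "0 < d"
      obtain n :: nat where n: "p / d < real n" using reals_Archimedean2 by blast
      have "p / (real n + 1) \<le> d"
        using n d by (simp add: field_simps p_def)
      have "(INF n. h n t) \<le> h n t" by (rule INF_lower) simp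
      also have "\<dots> \<le> ennreal (1 / (real n + 1)) * ennreal p"
        unfolding h_def p_def by (intro mult_mono ennreal_leI) auto
      also have "\<dots> = ennreal (p / (real n + 1))"
        by (subst ennreal_mult'[symmetric]) auto
      also have "\<dots> \<le> ennreal d" by (rule ennreal_leI) fact
      finally show "(INF n. h n t) \<le> 0 + ennreal d" by simp
    qed
    then show ?thesis by simp
  qed
  ultimately have "(INF n. (\<integral>\<^sup>+t. h n t \<partial>lborel)) = 0" by simp
  moreover have "ennreal \<epsilon> \<le> (INF n. (\<integral>\<^sup>+t. h n t \<partial>lborel))"
    by (rule INF_greatest) (rule eps)
  ultimately show False using e by simp
qed

lemma Linfty_iff:
  assumes wt: "weight w" and dec: "decreasing_pos w"
  shows "Linfty_pos w \<longleftrightarrow> (\<exists>B>0. \<forall>t>0. w t \<le> B)"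
proof
  assume "Linfty_pos w"
  then obtain C where C: "AE t in lborel. 0 < t \<longrightarrow> \<bar>w t\<bar> \<le> C" unfolding Linfty_pos_def by blast
  obtain N where N: "{t \<in> space lborel. \<not> (0 < t \<longrightarrow> \<bar>w t\<bar> \<le> C)} \<subseteq> N" "emeasure lborel N = 0" "N \<in> sets lborel"
    using AE_E[OF C] by blast
  have "w t \<le> C" if t: "0 < t" for t
  proof (rule ccontr)
    assume "\<not> w t \<le> C"
    have "{0<..<t} \<subseteq> N"
    proof
      fix s assume s: "s \<in> {0<..<t}"
      then have "w t \<le> w s" using dec unfolding decreasing_pos_def by auto
      then have "\<not> \<bar>w s\<bar> \<le> C" using \<open>\<not> w t \<le> C\<close> by linarith
      then show "s \<in> N" using N(1) s by auto
    qed
    then have "emeasure lborel {0<..<t} \<le> emeasure lborel N"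
      using N(3) by (intro emeasure_mono) auto
    then show False using N(2) t by simp
  qed
  then show "\<exists>B>0. \<forall>t>0. w t \<le> B" by (intro exI[of _ "max C 1"]) (auto simp: le_max_iff_disj)
next
  assume "\<exists>B>0. \<forall>t>0. w t \<le> B"
  then obtain B where B: "\<forall>t>0. w t \<le> B" by blast
  have "AE t in lborel. 0 < t \<longrightarrow> \<bar>w t\<bar> \<le> B"
    using B wt unfolding weight_def by (intro AE_I2) auto
  then show "Linfty_pos w" unfolding Linfty_pos_def by blast
qed

lemma ennreal_div_le:
  assumes C: "0 < C" and le: "ennreal x \<le> ennreal C * y"
  shows "ennreal (x / C) \<le> y"
proof (cases "0 \<le> x")
  case True
  have "ennreal C * ennreal (x / C) = ennreal (C * (x / C))" using C by (subst ennreal_mult') auto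
  also have "\<dots> = ennreal x" using C by simp
  finally have "ennreal C * ennreal (x / C) \<le> ennreal C * y" using le by simp
  then show ?thesis using C by (subst (asm) ennreal_mult_le_mult_iff) auto
next
  case False
  then have "x / C \<le> 0" using C by (simp add: divide_nonpos_pos)
  then show ?thesis by (simp add: ennreal_neg)
qed

lemma ennreal_inv_cancel:
  assumes c: "0 < c" shows "ennreal (1 / c) * (ennreal c * y) = y"
proof -
  have "ennreal (1 / c) * ennreal c = ennreal (1 / c * c)" using c by (subst ennreal_mult') auto
  also have "\<dots> = 1" using c by simp
  finally show ?thesis by (simp add: mult.assoc[symmetric])
qed

lemma lambda_indf_fin:
  assumes wt: "weight w"
  shows "lambda_norm w (indf 1 :: 'a::euclidean_space \<Rightarrow> real) < \<infinity>"
proof -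
  have "lambda_norm w (indf 1 :: 'a \<Rightarrow> real) = (\<integral>\<^sup>+ s\<in>{0<..<1}. ennreal (w s) \<partial>lborel)"
    unfolding lambda_indf[of 1, simplified]
    by (intro nn_integral_cong) (auto simp: indicator_def posf_def)
  then show ?thesis using wt unfolding weight_def by auto
qed

lemma part1:
  fixes w :: "real \<Rightarrow> real"
  assumes wt: "weight w" and dec: "decreasing_pos w"
  shows "(\<exists>v. weight v \<and> space_eq (lambda_norm w :: ('n::euclidean_space \<Rightarrow> real) \<Rightarrow> ennreal) (gamma_norm v))
           \<longleftrightarrow> winf w = 0"
proof
  assume "\<exists>v. weight v \<and> space_eq (lambda_norm w :: ('n \<Rightarrow> real) \<Rightarrow> ennreal) (gamma_norm v)"
  then obtain v where vt: "weight v" and eq: "space_eq (lambda_norm w :: ('n \<Rightarrow> real) \<Rightarrow> ennreal) (gamma_norm v)"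
    by blast
  from eq obtain C where C: "C > 0" "\<forall>f \<in> borel_measurable lebesgue. gamma_norm v (f :: 'n \<Rightarrow> real) \<le> ennreal C * lambda_norm w f"
    unfolding space_eq_def space_incl_def by blast
  from eq obtain D where D: "D > 0" "\<forall>f \<in> borel_measurable lebesgue. lambda_norm w (f :: 'n \<Rightarrow> real) \<le> ennreal D * gamma_norm v f"
    unfolding space_eq_def space_incl_def by blast
  have nn: "0 \<le> w t" if "0 < t" for t using wt that unfolding weight_def by auto
  note wp = winf_props[OF dec nn]
  show "winf w = 0"
  proof (rule ccontr)
    assume "winf w \<noteq> 0"
    then have c: "0 < winf w" using wp(3) by simp
    show False
    proof (rule gamma_sublinear_False[OF vt, of "winf w / D"])
      show "0 < winf w / D" using c D by simp
    next
      fix a :: real assume a: "0 < a"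
      have "ennreal (winf w * a) = ennreal (winf w) * L1_norm (indf a :: 'n \<Rightarrow> real)"
        using indf_props(3)[OF a, where 'a='n] c a by (simp add: ennreal_mult)
      also have "\<dots> \<le> lambda_norm w (indf a :: 'n \<Rightarrow> real)"
        by (rule L1_le_lambda[OF indf_props(1)[OF a]]) (rule wp(2))
      also have "\<dots> \<le> ennreal D * gamma_norm v (indf a :: 'n \<Rightarrow> real)"
        using D(2) indf_props(1)[OF a, where 'a='n] by blast
      finally have "ennreal (winf w * a / D) \<le> gamma_norm v (indf a :: 'n \<Rightarrow> real)"
        by (rule ennreal_div_le[OF D(1)])
      then show "ennreal (winf w / D * a) \<le> gamma_norm v (indf a :: 'n \<Rightarrow> real)" by simp
    next
      have "gamma_norm v (indf 1 :: 'n \<Rightarrow> real) \<le> ennreal C * lambda_norm w (indf 1 :: 'n \<Rightarrow> real)"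
        using C(2) indf_props(1)[of 1, where 'a='n] by simp
      also have "\<dots> < \<infinity>" using lambda_indf_fin[OF wt, where 'a='n]
        by (simp add: ennreal_mult_less_top)
      finally show "gamma_norm v (indf 1 :: 'n \<Rightarrow> real) < \<infinity>" .
    qed
  qed
next
  assume w0: "winf w = 0"
  let ?v = "\<lambda>t. w t - w (2 * t)"
  have "space_eq (lambda_norm w :: ('n \<Rightarrow> real) \<Rightarrow> ennreal) (gamma_norm ?v)"
    unfolding space_eq_def
  proof (intro conjI)
    show "space_incl (lambda_norm w :: ('n \<Rightarrow> real) \<Rightarrow> ennreal) (gamma_norm ?v)"
      unfolding space_incl_def
    proof (intro exI[of _ 1] conjI ballI)
      fix f :: "'n \<Rightarrow> real" assume "f \<in> borel_measurable lebesgue"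
      then show "gamma_norm ?v f \<le> ennreal 1 * lambda_norm w f"
        using construction(1)[OF wt dec] by simp
    qed simp
    show "space_incl (gamma_norm ?v) (lambda_norm w :: ('n \<Rightarrow> real) \<Rightarrow> ennreal)"
      unfolding space_incl_def
    proof (intro exI[of _ 4] conjI ballI)
      fix f :: "'n \<Rightarrow> real" assume "f \<in> borel_measurable lebesgue"
      then show "lambda_norm w f \<le> ennreal 4 * gamma_norm ?v f"
        using construction(2)[OF wt dec] w0 by simp
    qed simp
  qed
  then show "\<exists>v. weight v \<and> space_eq (lambda_norm w :: ('n \<Rightarrow> real) \<Rightarrow> ennreal) (gamma_norm v)"
    using weight_v[OF wt dec] by blast
qed

lemma part2:
  fixes w :: "real \<Rightarrow> real"
  assumes wt: "weight w" and dec: "decreasing_pos w"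
  shows "space_eq (lambda_norm w :: ('n::euclidean_space \<Rightarrow> real) \<Rightarrow> ennreal) L1_norm
           \<longleftrightarrow> winf w > 0 \<and> Linfty_pos w"
proof
  assume eq: "space_eq (lambda_norm w :: ('n \<Rightarrow> real) \<Rightarrow> ennreal) L1_norm"
  from eq obtain C where C: "C > 0" "\<forall>f \<in> borel_measurable lebesgue. L1_norm (f :: 'n \<Rightarrow> real) \<le> ennreal C * lambda_norm w f"
    unfolding space_eq_def space_incl_def by blast
  from eq obtain D where D: "D > 0" "\<forall>f \<in> borel_measurable lebesgue. lambda_norm w (f :: 'n \<Rightarrow> real) \<le> ennreal D * L1_norm f"
    unfolding space_eq_def space_incl_def by blast
  have "winf w > 0" by (rule pos_from_incl[OF wt dec C(1) C(2)])
  moreover have "\<forall>t>0. w t \<le> D" using bdd_from_incl[OF dec D(2)] D(1) by auto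
  then have "Linfty_pos w" using Linfty_iff[OF wt dec] D(1) by blast
  ultimately show "winf w > 0 \<and> Linfty_pos w" by blast
next
  assume "winf w > 0 \<and> Linfty_pos w"
  then have c: "winf w > 0" and "Linfty_pos w" by auto
  then obtain B where B: "B > 0" "\<forall>t>0. w t \<le> B" using Linfty_iff[OF wt dec] by blast
  have nn: "0 \<le> w t" if "0 < t" for t using wt that unfolding weight_def by auto
  note wp = winf_props[OF dec nn]
  show "space_eq (lambda_norm w :: ('n \<Rightarrow> real) \<Rightarrow> ennreal) L1_norm"
    unfolding space_eq_def
  proof (intro conjI)
    show "space_incl (lambda_norm w :: ('n \<Rightarrow> real) \<Rightarrow> ennreal) L1_norm"
      unfolding space_incl_def
    proof (intro exI[of _ "1 / winf w"] conjI ballI)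
      fix f :: "'n \<Rightarrow> real" assume f: "f \<in> borel_measurable lebesgue"
      have "ennreal (winf w) * L1_norm f \<le> lambda_norm w f"
        by (rule L1_le_lambda[OF f]) (rule wp(2))
      then have "ennreal (1 / winf w) * (ennreal (winf w) * L1_norm f) \<le> ennreal (1 / winf w) * lambda_norm w f"
        by (rule mult_left_mono) simp
      then show "L1_norm f \<le> ennreal (1 / winf w) * lambda_norm w f"
        using ennreal_inv_cancel[OF c] by simp
    qed (use c in simp)
    show "space_incl L1_norm (lambda_norm w :: ('n \<Rightarrow> real) \<Rightarrow> ennreal)"
      unfolding space_incl_def
    proof (intro exI[of _ B] conjI ballI)
      fix f :: "'n \<Rightarrow> real" assume f: "f \<in> borel_measurable lebesgue"
      show "lambda_norm w f \<le> ennreal B * L1_norm f"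
        by (rule lambda_le_L1[OF f]) (use B in auto)
    qed (use B in simp)
  qed
qed

lemma part3:
  fixes w :: "real \<Rightarrow> real"
  assumes wt: "weight w" and dec: "decreasing_pos w"
  shows "(\<exists>v. weight v \<and>
            space_eq (lambda_norm w :: ('n::euclidean_space \<Rightarrow> real) \<Rightarrow> ennreal) (\<lambda>f. gamma_norm v f + L1_norm f)
            \<and> \<not> space_incl (L1_norm :: ('n \<Rightarrow> real) \<Rightarrow> ennreal) (gamma_norm v)
            \<and> \<not> space_incl (gamma_norm v :: ('n \<Rightarrow> real) \<Rightarrow> ennreal) L1_norm)
           \<longleftrightarrow> winf w > 0 \<and> \<not> Linfty_pos w"
proof
  assume "\<exists>v. weight v \<and>
            space_eq (lambda_norm w :: ('n \<Rightarrow> real) \<Rightarrow> ennreal) (\<lambda>f. gamma_norm v f + L1_norm f)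
            \<and> \<not> space_incl (L1_norm :: ('n \<Rightarrow> real) \<Rightarrow> ennreal) (gamma_norm v)
            \<and> \<not> space_incl (gamma_norm v :: ('n \<Rightarrow> real) \<Rightarrow> ennreal) L1_norm"
  then obtain v where vt: "weight v"
    and eq: "space_eq (lambda_norm w :: ('n \<Rightarrow> real) \<Rightarrow> ennreal) (\<lambda>f. gamma_norm v f + L1_norm f)"
    and nL: "\<not> space_incl (L1_norm :: ('n \<Rightarrow> real) \<Rightarrow> ennreal) (gamma_norm v)" by blast
  from eq obtain C where C: "C > 0" "\<forall>f \<in> borel_measurable lebesgue. gamma_norm v f + L1_norm (f :: 'n \<Rightarrow> real) \<le> ennreal C * lambda_norm w f"
    unfolding space_eq_def space_incl_def by blast
  have CL: "\<forall>f \<in> borel_measurable lebesgue. L1_norm (f :: 'n \<Rightarrow> real) \<le> ennreal C * lambda_norm w f"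
  proof
    fix f :: "'n \<Rightarrow> real" assume "f \<in> borel_measurable lebesgue"
    then have "gamma_norm v f + L1_norm f \<le> ennreal C * lambda_norm w f" using C(2) by blast
    moreover have "L1_norm f \<le> gamma_norm v f + L1_norm f" by (rule add_increasing) simp_all
    ultimately show "L1_norm f \<le> ennreal C * lambda_norm w f" by (rule order_trans[rotated])
  qed
  have "winf w > 0" by (rule pos_from_incl[OF wt dec C(1) CL])
  moreover have "\<not> Linfty_pos w"
  proof
    assume "Linfty_pos w"
    then obtain B where B: "B > 0" "\<forall>t>0. w t \<le> B" using Linfty_iff[OF wt dec] by blast
    have "space_incl (L1_norm :: ('n \<Rightarrow> real) \<Rightarrow> ennreal) (gamma_norm v)"
      unfolding space_incl_def
    proof (intro exI[of _ "C * B"] conjI ballI)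
      fix f :: "'n \<Rightarrow> real" assume f: "f \<in> borel_measurable lebesgue"
      have "gamma_norm v f \<le> gamma_norm v f + L1_norm f" by (rule add_increasing2) simp_all
      also have "\<dots> \<le> ennreal C * lambda_norm w f" using C(2) f by blast
      also have "\<dots> \<le> ennreal C * (ennreal B * L1_norm f)"
        by (rule mult_left_mono) (use lambda_le_L1[OF f, of w B] B in auto)
      also have "\<dots> = ennreal (C * B) * L1_norm f"
        using C B by (simp add: ennreal_mult mult.assoc)
      finally show "gamma_norm v f \<le> ennreal (C * B) * L1_norm f" .
    qed (use C B in simp)
    then show False using nL by simp
  qed
  ultimately show "winf w > 0 \<and> \<not> Linfty_pos w" by blast
next
  assume "winf w > 0 \<and> \<not> Linfty_pos w"
  then have c: "winf w > 0" and nLi: "\<not> Linfty_pos w" by auto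
  have nn: "0 \<le> w t" if "0 < t" for t using wt that unfolding weight_def by auto
  note wp = winf_props[OF dec nn]
  define v where "v = (\<lambda>t. w t - w (2 * t))"
  have vt: "weight v" unfolding v_def by (rule weight_v[OF wt dec])
  note con1 = construction(1)[OF wt dec, folded v_def]
  note con2 = construction(2)[OF wt dec, folded v_def]
  have L1l: "L1_norm f \<le> ennreal (1 / winf w) * lambda_norm w f"
    if f: "f \<in> borel_measurable lebesgue" for f :: "'n \<Rightarrow> real"
  proof -
    have "ennreal (winf w) * L1_norm f \<le> lambda_norm w f"
      by (rule L1_le_lambda[OF f]) (rule wp(2))
    then have "ennreal (1 / winf w) * (ennreal (winf w) * L1_norm f) \<le> ennreal (1 / winf w) * lambda_norm w f"
      by (rule mult_left_mono) simp
    then show ?thesis using ennreal_inv_cancel[OF c] by simp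
  qed
  have eq: "space_eq (lambda_norm w :: ('n \<Rightarrow> real) \<Rightarrow> ennreal) (\<lambda>f. gamma_norm v f + L1_norm f)"
    unfolding space_eq_def
  proof (intro conjI)
    show "space_incl (lambda_norm w :: ('n \<Rightarrow> real) \<Rightarrow> ennreal) (\<lambda>f. gamma_norm v f + L1_norm f)"
      unfolding space_incl_def
    proof (intro exI[of _ "1 + 1 / winf w"] conjI ballI)
      fix f :: "'n \<Rightarrow> real" assume f: "f \<in> borel_measurable lebesgue"
      have "gamma_norm v f + L1_norm f \<le> lambda_norm w f + ennreal (1 / winf w) * lambda_norm w f"
        using con1[OF f] L1l[OF f] by (rule add_mono)
      also have "\<dots> = ennreal (1 + 1 / winf w) * lambda_norm w f"
        using c by (simp add: distrib_right)
      finally show "gamma_norm v f + L1_norm f \<le> ennreal (1 + 1 / winf w) * lambda_norm w f" .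
    qed (use c in \<open>simp add: add_pos_pos\<close>)
    show "space_incl (\<lambda>f. gamma_norm v f + L1_norm f) (lambda_norm w :: ('n \<Rightarrow> real) \<Rightarrow> ennreal)"
      unfolding space_incl_def
    proof (intro exI[of _ "4 + winf w"] conjI ballI)
      fix f :: "'n \<Rightarrow> real" assume f: "f \<in> borel_measurable lebesgue"
      have "lambda_norm w f \<le> 4 * gamma_norm v f + ennreal (winf w) * L1_norm f" by (rule con2[OF f])
      also have "\<dots> \<le> ennreal (4 + winf w) * gamma_norm v f + ennreal (4 + winf w) * L1_norm f"
      proof (rule add_mono)
        have "(4::ennreal) = ennreal 4" by simp
        also have "\<dots> \<le> ennreal (4 + winf w)" using c by (intro ennreal_leI) simp
        finally show "4 * gamma_norm v f \<le> ennreal (4 + winf w) * gamma_norm v f"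
          by (rule mult_right_mono) simp
        show "ennreal (winf w) * L1_norm f \<le> ennreal (4 + winf w) * L1_norm f"
          by (rule mult_right_mono) (use c in \<open>auto intro: ennreal_leI\<close>)
      qed
      also have "\<dots> = ennreal (4 + winf w) * (gamma_norm v f + L1_norm f)" by (simp add: distrib_left)
      finally show "lambda_norm w f \<le> ennreal (4 + winf w) * (gamma_norm v f + L1_norm f)" .
    qed (use c in simp)
  qed
  have nL: "\<not> space_incl (L1_norm :: ('n \<Rightarrow> real) \<Rightarrow> ennreal) (gamma_norm v)"
  proof
    assume "space_incl (L1_norm :: ('n \<Rightarrow> real) \<Rightarrow> ennreal) (gamma_norm v)"
    then obtain C where C: "C > 0" "\<forall>f \<in> borel_measurable lebesgue. gamma_norm v (f :: 'n \<Rightarrow> real) \<le> ennreal C * L1_norm f"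
      unfolding space_incl_def by blast
    have H: "\<forall>f \<in> borel_measurable lebesgue. lambda_norm w (f :: 'n \<Rightarrow> real) \<le> ennreal (4 * C + winf w) * L1_norm f"
    proof
      fix f :: "'n \<Rightarrow> real" assume f: "f \<in> borel_measurable lebesgue"
      have "lambda_norm w f \<le> 4 * gamma_norm v f + ennreal (winf w) * L1_norm f" by (rule con2[OF f])
      also have "\<dots> \<le> 4 * (ennreal C * L1_norm f) + ennreal (winf w) * L1_norm f"
        using C(2) f by (intro add_mono mult_left_mono) auto
      also have "\<dots> = ennreal (4 * C + winf w) * L1_norm f"
        using C c by (simp add: distrib_right ennreal_mult mult.assoc)
      finally show "lambda_norm w f \<le> ennreal (4 * C + winf w) * L1_norm f" .
    qed
    have "\<forall>t>0. w t \<le> 4 * C + winf w" using bdd_from_incl[OF dec H] C c by auto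
    then have "Linfty_pos w" using Linfty_iff[OF wt dec] C c
      by (intro iffD2[OF Linfty_iff[OF wt dec]] exI[of _ "4 * C + winf w"]) auto
    then show False using nLi by simp
  qed
  have nG: "\<not> space_incl (gamma_norm v :: ('n \<Rightarrow> real) \<Rightarrow> ennreal) L1_norm"
  proof
    assume "space_incl (gamma_norm v :: ('n \<Rightarrow> real) \<Rightarrow> ennreal) L1_norm"
    then obtain C where C: "C > 0" "\<forall>f \<in> borel_measurable lebesgue. L1_norm (f :: 'n \<Rightarrow> real) \<le> ennreal C * gamma_norm v f"
      unfolding space_incl_def by blast
    show False
    proof (rule gamma_sublinear_False[OF vt, of "1 / C"])
      show "0 < 1 / C" using C by simp
    next
      fix a :: real assume a: "0 < a"
      have "ennreal a = L1_norm (indf a :: 'n \<Rightarrow> real)" using indf_props(3)[OF a, where 'a='n] by simp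
      also have "\<dots> \<le> ennreal C * gamma_norm v (indf a :: 'n \<Rightarrow> real)"
        using C(2) indf_props(1)[OF a, where 'a='n] by blast
      finally have "ennreal (a / C) \<le> gamma_norm v (indf a :: 'n \<Rightarrow> real)"
        by (rule ennreal_div_le[OF C(1)])
      then show "ennreal (1 / C * a) \<le> gamma_norm v (indf a :: 'n \<Rightarrow> real)" by simp
    next
      have "gamma_norm v (indf 1 :: 'n \<Rightarrow> real) \<le> lambda_norm w (indf 1 :: 'n \<Rightarrow> real)"
        by (rule con1[OF indf_props(1)]) simp
      also have "\<dots> < \<infinity>" by (rule lambda_indf_fin[OF wt])
      finally show "gamma_norm v (indf 1 :: 'n \<Rightarrow> real) < \<infinity>" .
    qed
  qed
  show "\<exists>v. weight v \<and>
            space_eq (lambda_norm w :: ('n \<Rightarrow> real) \<Rightarrow> ennreal) (\<lambda>f. gamma_norm v f + L1_norm f)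
            \<and> \<not> space_incl (L1_norm :: ('n \<Rightarrow> real) \<Rightarrow> ennreal) (gamma_norm v)
            \<and> \<not> space_incl (gamma_norm v :: ('n \<Rightarrow> real) \<Rightarrow> ennreal) L1_norm"
    using vt eq nL nG by blast
qed

theorem theorem3p1:
  fixes w :: "real \<Rightarrow> real"
  assumes "weight w" and "decreasing_pos w"
  shows "((\<exists>v. weight v \<and>
            space_eq (lambda_norm w :: ('n::euclidean_space \<Rightarrow> real) \<Rightarrow> ennreal) (gamma_norm v))
           \<longleftrightarrow> winf w = 0)
       \<and> (space_eq (lambda_norm w :: ('n \<Rightarrow> real) \<Rightarrow> ennreal) L1_norm
           \<longleftrightarrow> winf w > 0 \<and> Linfty_pos w)
       \<and> ((\<exists>v. weight v \<and>
            space_eq (lambda_norm w :: ('n \<Rightarrow> real) \<Rightarrow> ennreal) (\<lambda>f. gamma_norm v f + L1_norm f)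
            \<and> \<not> space_incl (L1_norm :: ('n \<Rightarrow> real) \<Rightarrow> ennreal) (gamma_norm v)
            \<and> \<not> space_incl (gamma_norm v :: ('n \<Rightarrow> real) \<Rightarrow> ennreal) L1_norm)
           \<longleftrightarrow> winf w > 0 \<and> \<not> Linfty_pos w)"
  using part1[OF assms, where 'n='n] part2[OF assms, where 'n='n] part3[OF assms, where 'n='n] by blast


end
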